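(* The full subcategory of $\mathrm{Vect}_{\mathbb{F}}^{\mathbb{M}^{\circ}}$ consisting of pointwise finite-dimensional, sequentially continuous functors is a weak Serre subcategory: if $F_1\to F_2\to F_3\to F_4\to F_5$ is an exact sequence of functors $\mathbb{M}^{\circ}\to\mathrm{Vect}_{\mathbb{F}}$ with $F_1,F_2,F_4,F_5$ pointwise finite-dimensional and sequentially continuous, then $F_3$ is pointwise finite-dimensional and sequentially continuous.
   Context: Fix a field $\mathbb{F}$. Equip $\mathbb{R}^2$ with the partial order $(x,y)\preceq(x',y')$ iff $x'\le x$ and $y\le y'$. Fix reals $a<b$ and let $\mathbb{M}=\{(x,y): a\le x+y\le b\}$. Functors $\mathbb{M}^{\circ}\to\mathrm{Vect}_{\mathbb{F}}$ are contravariant in $\preceq$. A functor $G$ is sequentially continuous if for every $\preceq$-increasing sequence $(u_k)$ in $\mathbb{M}$ converging (Euclidean) to $u$, the natural map $G(u)\to\varprojlim_kG(u_k)$ is an isomorphism. *)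

theory Defs
  imports "HOL-Analysis.Analysis"
begin

definition leM :: "real \<times> real \<Rightarrow> real \<times> real \<Rightarrow> bool" where
  "leM p q \<longleftrightarrow> fst q \<le> fst p \<and> snd p \<le> snd q"

definition Mstrip :: "real \<Rightarrow> real \<Rightarrow> (real \<times> real) set" where
  "Mstrip a b = {p. a \<le> fst p + snd p \<and> fst p + snd p \<le> b}"

definition lin_on :: "('k::field \<Rightarrow> 'v::ab_group_add \<Rightarrow> 'v) \<Rightarrow> ('k \<Rightarrow> 'w::ab_group_add \<Rightarrow> 'w)
    \<Rightarrow> 'v set \<Rightarrow> ('v \<Rightarrow> 'w) \<Rightarrow> bool" where
  "lin_on s1 s2 S f \<longleftrightarrow>
     (\<forall>x\<in>S. \<forall>y\<in>S. f (x + y) = f x + f y) \<and> (\<forall>c. \<forall>x\<in>S. f (s1 c x) = s2 c (f x))"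

text \<open>The vector space G(u) is the subspace Obj u of the
  ambient k-vector space (type 'v with scalar multiplication s); for u \<preceq> w in M,
  Mor u w : G(w) -> G(u) is the structure map (contravariant in \<preceq>).\<close>
definition is_functor :: "(real \<times> real) set \<Rightarrow> ('k::field \<Rightarrow> 'v::ab_group_add \<Rightarrow> 'v)
    \<Rightarrow> (real \<times> real \<Rightarrow> 'v set) \<Rightarrow> (real \<times> real \<Rightarrow> real \<times> real \<Rightarrow> 'v \<Rightarrow> 'v) \<Rightarrow> bool" where
  "is_functor M s Obj Mor \<longleftrightarrow>
     vector_space s \<and>
     (\<forall>u\<in>M. module.subspace s (Obj u)) \<and>
     (\<forall>u\<in>M. \<forall>w\<in>M. leM u w \<longrightarrow> Mor u w ` Obj w \<subseteq> Obj u \<and> lin_on s s (Obj w) (Mor u w)) \<and>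
     (\<forall>u\<in>M. \<forall>x\<in>Obj u. Mor u u x = x) \<and>
     (\<forall>u\<in>M. \<forall>v\<in>M. \<forall>w\<in>M. leM u v \<longrightarrow> leM v w \<longrightarrow>
        (\<forall>x\<in>Obj w. Mor u v (Mor v w x) = Mor u w x))"

definition is_nat_trans :: "(real \<times> real) set
    \<Rightarrow> ('k::field \<Rightarrow> 'v::ab_group_add \<Rightarrow> 'v) \<Rightarrow> (real \<times> real \<Rightarrow> 'v set) \<Rightarrow> (real \<times> real \<Rightarrow> real \<times> real \<Rightarrow> 'v \<Rightarrow> 'v)
    \<Rightarrow> ('k \<Rightarrow> 'w::ab_group_add \<Rightarrow> 'w) \<Rightarrow> (real \<times> real \<Rightarrow> 'w set) \<Rightarrow> (real \<times> real \<Rightarrow> real \<times> real \<Rightarrow> 'w \<Rightarrow> 'w)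
    \<Rightarrow> (real \<times> real \<Rightarrow> 'v \<Rightarrow> 'w) \<Rightarrow> bool" where
  "is_nat_trans M s1 Obj1 Mor1 s2 Obj2 Mor2 \<eta> \<longleftrightarrow>
     (\<forall>u\<in>M. \<eta> u ` Obj1 u \<subseteq> Obj2 u \<and> lin_on s1 s2 (Obj1 u) (\<eta> u)) \<and>
     (\<forall>u\<in>M. \<forall>w\<in>M. leM u w \<longrightarrow> (\<forall>x\<in>Obj1 w. \<eta> u (Mor1 u w x) = Mor2 u w (\<eta> w x)))"

definition exact_at :: "(real \<times> real) set \<Rightarrow> (real \<times> real \<Rightarrow> 'v set) \<Rightarrow> (real \<times> real \<Rightarrow> 'v \<Rightarrow> 'w)
    \<Rightarrow> (real \<times> real \<Rightarrow> 'w::zero set) \<Rightarrow> (real \<times> real \<Rightarrow> 'w \<Rightarrow> 'x::zero) \<Rightarrow> bool" where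
  "exact_at M Obj1 \<eta> Obj2 \<theta> \<longleftrightarrow>
     (\<forall>u\<in>M. \<eta> u ` Obj1 u = {y \<in> Obj2 u. \<theta> u y = 0})"

definition pfd :: "(real \<times> real) set \<Rightarrow> ('k::field \<Rightarrow> 'v::ab_group_add \<Rightarrow> 'v) \<Rightarrow> (real \<times> real \<Rightarrow> 'v set) \<Rightarrow> bool" where
  "pfd M s Obj \<longleftrightarrow> (\<forall>u\<in>M. \<exists>B. finite B \<and> B \<subseteq> Obj u \<and> module.span s B = Obj u)"

definition invlim :: "(real \<times> real \<Rightarrow> 'v set) \<Rightarrow> (real \<times> real \<Rightarrow> real \<times> real \<Rightarrow> 'v \<Rightarrow> 'v)
    \<Rightarrow> (nat \<Rightarrow> real \<times> real) \<Rightarrow> (nat \<Rightarrow> 'v) set" where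
  "invlim Obj Mor uu = {y. (\<forall>k. y k \<in> Obj (uu k)) \<and> (\<forall>k l. k \<le> l \<longrightarrow> Mor (uu k) (uu l) (y l) = y k)}"

text \<open>Sequential continuity: for every \<preceq>-increasing sequence in M converging (Euclidean)
  to u, the natural map G(u) -> lim G(u_k) is an isomorphism (it is linear, so bijective).\<close>
definition seq_cont :: "(real \<times> real) set \<Rightarrow> (real \<times> real \<Rightarrow> 'v set)
    \<Rightarrow> (real \<times> real \<Rightarrow> real \<times> real \<Rightarrow> 'v \<Rightarrow> 'v) \<Rightarrow> bool" where
  "seq_cont M Obj Mor \<longleftrightarrow>
     (\<forall>uu u. (\<forall>k. uu k \<in> M) \<and> (\<forall>k. leM (uu k) (uu (Suc k))) \<and> uu \<longlonglongrightarrow> u \<longrightarrow>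
        bij_betw (\<lambda>x k. Mor (uu k) u x) (Obj u) (invlim Obj Mor uu))"

end

theory Submission imports Defs begin

lemma lin_on_add: "lin_on s1 s2 S f \<Longrightarrow> x \<in> S \<Longrightarrow> y \<in> S \<Longrightarrow> f (x + y) = f x + f y"
  by (simp add: lin_on_def)

lemma lin_on_scale: "lin_on s1 s2 S f \<Longrightarrow> x \<in> S \<Longrightarrow> f (s1 c x) = s2 c (f x)"
  by (simp add: lin_on_def)

lemma lin_on_0: assumes "lin_on s1 s2 S f" "0 \<in> S" shows "f 0 = 0"
proof -
  have "f (0 + 0) = f 0 + f 0" using lin_on_add[OF assms(1) assms(2) assms(2)] .
  then show ?thesis by simp
qed

lemma lin_on_diff:
  assumes "module s1" "module.subspace s1 S" "lin_on s1 s2 S f" "x \<in> S" "y \<in> S"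
  shows "f (x - y) = f x - f y"
proof -
  interpret M: module s1 by fact
  have d: "x - y \<in> S" using M.subspace_diff assms by blast
  have "f x = f ((x - y) + y)" by simp
  also have "\<dots> = f (x - y) + f y" using lin_on_add[OF assms(3) d assms(5)] .
  finally show ?thesis by (simp add: algebra_simps)
qed

lemma image_subspace:
  assumes "module s1" "module s2" "module.subspace s1 S" "lin_on s1 s2 S f"
    "module.subspace s1 T" "T \<subseteq> S"
  shows "module.subspace s2 (f ` T)"
proof -
  interpret M1: module s1 by fact
  interpret M2: module s2 by fact
  have "f 0 = 0" using lin_on_0 assms M1.subspace_0 by blast
  moreover have "0 \<in> T" using M1.subspace_0 assms by blast
  ultimately have "0 \<in> f ` T" by force
  moreover have "\<forall>x\<in>f ` T. \<forall>y\<in>f ` T. x + y \<in> f ` T"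
  proof (intro ballI)
    fix x y assume "x \<in> f ` T" "y \<in> f ` T"
    then obtain x' y' where "x' \<in> T" "y' \<in> T" "x = f x'" "y = f y'" by blast
    moreover have "x' + y' \<in> T" using M1.subspace_add assms calculation by blast
    moreover have "f (x' + y') = f x' + f y'" using lin_on_add assms calculation by blast
    ultimately show "x + y \<in> f ` T" by (metis image_eqI)
  qed
  moreover have "\<forall>c. \<forall>x\<in>f ` T. s2 c x \<in> f ` T"
  proof (intro allI ballI)
    fix c x assume "x \<in> f ` T"
    then obtain x' where "x' \<in> T" "x = f x'" by blast
    moreover have "s1 c x' \<in> T" using M1.subspace_scale assms calculation by blast
    moreover have "f (s1 c x') = s2 c (f x')" using lin_on_scale assms calculation by blast
    ultimately show "s2 c x \<in> f ` T" by (metis image_eqI)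
  qed
  ultimately show ?thesis unfolding M2.subspace_def by blast
qed

lemma lin_on_span:
  assumes "module s1" "module s2" "module.subspace s1 S" "lin_on s1 s2 S f" "X \<subseteq> S"
  shows "f ` module.span s1 X = module.span s2 (f ` X)"
proof -
  interpret M1: module s1 by fact
  interpret M2: module s2 by fact
  have f0: "f 0 = 0" using lin_on_0 assms M1.subspace_0 by blast
  have sp: "M1.span X \<subseteq> S" using M1.span_minimal assms by blast
  have "x \<in> S \<and> f x \<in> M2.span (f ` X)" if "x \<in> M1.span X" for x
    using that
  proof (induction rule: M1.span_induct_alt)
    case base
    then show ?case using f0 M1.subspace_0 assms M2.span_zero by auto
  next
    case (step c x y)
    have x: "x \<in> S" using step(1) assms(5) by blast
    have cx: "s1 c x \<in> S" using M1.subspace_scale[OF assms(3) x] .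
    have y: "y \<in> S" using step(2) by blast
    have "f (s1 c x + y) = f (s1 c x) + f y" using lin_on_add[OF assms(4) cx y] .
    also have "\<dots> = s2 c (f x) + f y" using lin_on_scale[OF assms(4) x] by simp
    finally have e: "f (s1 c x + y) = s2 c (f x) + f y" .
    have fx: "f x \<in> M2.span (f ` X)" using step(1) by (simp add: M2.span_base)
    have "s2 c (f x) + f y \<in> M2.span (f ` X)"
      by (rule M2.span_add[OF M2.span_scale[OF fx]]) (use step(2) in blast)
    moreover have "s1 c x + y \<in> S" using M1.subspace_add[OF assms(3) cx y] .
    ultimately show ?case using e by simp
  qed
  then have 1: "f ` M1.span X \<subseteq> M2.span (f ` X)" by blast
  have "M2.subspace (f ` M1.span X)"
    using image_subspace[OF assms(1-4) M1.subspace_span sp] .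
  moreover have "f ` X \<subseteq> f ` M1.span X" using M1.span_superset by blast
  ultimately have "M2.span (f ` X) \<subseteq> f ` M1.span X" using M2.span_minimal by blast
  with 1 show ?thesis by blast
qed

context vector_space begin

lemma fd_dim_mono:
  assumes "S \<subseteq> T" "T \<subseteq> span B" "finite B"
  shows "dim S \<le> dim T"
proof -
  obtain BS where BS: "BS \<subseteq> S" "independent BS" "S \<subseteq> span BS" "card BS = dim S"
    using basis_exists by blast
  obtain BT where BT: "BT \<subseteq> T" "independent BT" "T \<subseteq> span BT" "card BT = dim T"
    using basis_exists by blast
  have "finite BT" using independent_span_bound[OF assms(3) BT(2)] BT assms by blast
  moreover have "BS \<subseteq> span BT" using BS BT assms by blast
  ultimately have "card BS \<le> card BT" using independent_span_bound[OF _ BS(2)] by blast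
  then show ?thesis using BS(4) BT(4) by simp
qed

lemma fd_dim_eq:
  assumes "subspace S" "S \<subseteq> T" "T \<subseteq> span B" "finite B" "dim T \<le> dim S"
  shows "S = T"
proof -
  obtain BS where BS: "BS \<subseteq> S" "independent BS" "S \<subseteq> span BS" "card BS = dim S"
    using basis_exists by blast
  obtain BT where BT: "BT \<subseteq> T" "independent BT" "T \<subseteq> span BT" "card BT = dim T"
    using basis_exists by blast
  have fBT: "finite BT" using independent_span_bound[OF assms(4) BT(2)] BT assms by blast
  have fBS: "finite BS" using independent_span_bound[OF fBT BS(2)] BS BT assms by blast
  have spS: "span BS = S" using span_subspace[OF BS(1) BS(3) assms(1)] .
  have "T \<subseteq> span BS"
  proof
    fix x assume xT: "x \<in> T"
    show "x \<in> span BS"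
    proof (rule ccontr)
      assume nx: "x \<notin> span BS"
      have i: "independent (insert x BS)" by (rule independent_insertI[OF nx BS(2)])
      have ss: "insert x BS \<subseteq> span BT" using xT BS(1) BT(3) assms(2) by blast
      have c: "card (insert x BS) \<le> card BT" using independent_span_bound[OF fBT i ss] by blast
      have "x \<notin> BS" using nx span_superset by blast
      then have "card (insert x BS) = Suc (card BS)" using fBS by simp
      then show False using c BS(4) BT(4) assms(5) by simp
    qed
  qed
  then show ?thesis using spS assms by blast
qed


lemma tower_lift:
  fixes A :: "nat \<Rightarrow> 'b set" and m :: "nat \<Rightarrow> nat \<Rightarrow> 'b \<Rightarrow> 'b"
    and f :: "nat \<Rightarrow> 'b \<Rightarrow> 'c::ab_group_add" and s2 :: "'a \<Rightarrow> 'c \<Rightarrow> 'c" and y :: "nat \<Rightarrow> 'c"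
  assumes s2: "module s2"
    and sub: "\<And>k. subspace (A k)"
    and fd: "\<And>k. \<exists>B. finite B \<and> A k \<subseteq> span B"
    and mA: "\<And>k l. k \<le> l \<Longrightarrow> m k l ` A l \<subseteq> A k"
    and mlin: "\<And>k l. k \<le> l \<Longrightarrow> lin_on scale scale (A l) (m k l)"
    and mid: "\<And>k x. x \<in> A k \<Longrightarrow> m k k x = x"
    and comp: "\<And>k l n x. k \<le> l \<Longrightarrow> l \<le> n \<Longrightarrow> x \<in> A n \<Longrightarrow> m k l (m l n x) = m k n x"
    and flin: "\<And>l. lin_on scale s2 (A l) (f l)"
    and tr: "\<And>k l x. k \<le> l \<Longrightarrow> x \<in> A l \<Longrightarrow> f l x = y l \<Longrightarrow> f k (m k l x) = y k"
    and ne: "\<And>l. \<exists>x\<in>A l. f l x = y l"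
  shows "\<exists>x. (\<forall>k. x k \<in> A k \<and> f k (x k) = y k) \<and> (\<forall>k l. k \<le> l \<longrightarrow> m k l (x l) = x k)"
proof -
  interpret M2: module s2 by fact
  have mod1: "module scale" by unfold_locales
  define P where "P l = {x \<in> A l. f l x = y l}" for l
  define K where "K l = {x \<in> A l. f l x = 0}" for l
  define I where "I k l = m k l ` P l" for k l
  define V where "V k l = m k l ` K l" for k l
  have f0: "f l 0 = 0" for l using lin_on_0[OF flin subspace_0[OF sub]] .
  have K_sub: "subspace (K l)" for l
    unfolding subspace_def K_def
  proof (intro conjI ballI allI)
    show "0 \<in> {x \<in> A l. f l x = 0}" using f0 subspace_0[OF sub] by simp
  next
    fix x y assume "x \<in> {x \<in> A l. f l x = 0}" "y \<in> {x \<in> A l. f l x = 0}"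
    then show "x + y \<in> {x \<in> A l. f l x = 0}"
      using lin_on_add[OF flin] subspace_add[OF sub] by auto
  next
    fix c x assume "x \<in> {x \<in> A l. f l x = 0}"
    then show "c *s x \<in> {x \<in> A l. f l x = 0}"
      using lin_on_scale[OF flin] subspace_scale[OF sub] by auto
  qed
  have K_A: "K l \<subseteq> A l" for l unfolding K_def by blast
  have P_A: "P l \<subseteq> A l" for l unfolding P_def by blast
  have V_sub: "subspace (V k l)" if "k \<le> l" for k l
    unfolding V_def using image_subspace[OF mod1 mod1 sub mlin[OF that] K_sub K_A] .
  have V_A: "V k l \<subseteq> A k" if "k \<le> l" for k l
    unfolding V_def using mA[OF that] K_A by blast
  have P_diff: "p - p' \<in> K l" if "p \<in> P l" "p' \<in> P l" for p p' l
    using that lin_on_diff[OF mod1 sub flin] subspace_diff[OF sub] unfolding P_def K_def by auto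
  have P_addK: "p + z \<in> P l" if "p \<in> P l" "z \<in> K l" for p z l
    using that lin_on_add[OF flin] subspace_add[OF sub] unfolding P_def K_def by auto
  have P_tr: "m k l p \<in> P k" if "k \<le> l" "p \<in> P l" for k l p
    using that tr mA unfolding P_def by blast
  have K_tr: "m k l z \<in> K k" if kl: "k \<le> l" and z: "z \<in> K l" for k l z
  proof -
    obtain p where p: "p \<in> P l" using ne unfolding P_def by blast
    have pz: "p + z \<in> P l" using P_addK p z .
    have "m k l (p + z) = m k l p + m k l z"
      using lin_on_add[OF mlin[OF kl]] p z P_A K_A by blast
    then have "m k l z = m k l (p + z) - m k l p" by simp
    also have "\<dots> \<in> K k" using P_diff P_tr kl pz p by blast
    finally show ?thesis .
  qed
  have V_dec: "V k l' \<subseteq> V k l" if "k \<le> l" "l \<le> l'" for k l l'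
  proof
    fix v assume "v \<in> V k l'"
    then obtain z where z: "z \<in> K l'" "v = m k l' z" unfolding V_def by blast
    then have "v = m k l (m l l' z)" using comp[of k l l' z] that K_A[of l'] by auto
    moreover have "m l l' z \<in> K l" using K_tr that z by blast
    ultimately show "v \<in> V k l" unfolding V_def by blast
  qed
  have I_dec: "I k l' \<subseteq> I k l" if "k \<le> l" "l \<le> l'" for k l l'
  proof
    fix v assume "v \<in> I k l'"
    then obtain z where z: "z \<in> P l'" "v = m k l' z" unfolding I_def by blast
    then have "v = m k l (m l l' z)" using comp[of k l l' z] that P_A[of l'] by auto
    moreover have "m l l' z \<in> P l" using P_tr that z by blast
    ultimately show "v \<in> I k l" unfolding I_def by blast
  qed
  have I_P: "I k l \<subseteq> P k" if "k \<le> l" for k l unfolding I_def using P_tr that by blast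
  have I_ne: "I k l \<noteq> {}" for k l using ne unfolding I_def P_def by blast
  have stab: "\<exists>N\<ge>k. \<forall>l\<ge>N. V k l = V k N" for k
  proof -
    obtain B where B: "finite B" "A k \<subseteq> span B" using fd by blast
    obtain N where N: "N \<ge> k" "\<And>l. l \<ge> k \<Longrightarrow> dim (V k N) \<le> dim (V k l)"
      using ex_has_least_nat[of "\<lambda>l. l \<ge> k" k "\<lambda>l. dim (V k l)"] by auto
    have "V k l = V k N" if "l \<ge> N" for l
    proof (rule fd_dim_eq[OF V_sub _ _ B(1)])
      show "k \<le> l" using that N by simp
      show "V k l \<subseteq> V k N" using V_dec N that by blast
      show "V k N \<subseteq> span B" using V_A N B by blast
      show "dim (V k N) \<le> dim (V k l)" using N that by simp
    qed
    then show ?thesis using N by blast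
  qed
  have Istab: "\<exists>N\<ge>k. \<forall>l\<ge>N. I k l = I k N" for k
  proof -
    obtain N where N: "N \<ge> k" "\<And>l. l \<ge> N \<Longrightarrow> V k l = V k N" using stab by blast
    have "I k l = I k N" if lN: "l \<ge> N" for l
    proof
      show "I k l \<subseteq> I k N" using I_dec N lN by blast
      show "I k N \<subseteq> I k l"
      proof
        fix x assume "x \<in> I k N"
        then obtain p where p: "p \<in> P N" "x = m k N p" unfolding I_def by blast
        obtain q where q: "q \<in> I k l" using I_ne by blast
        then obtain p' where p': "p' \<in> P l" "q = m k l p'" unfolding I_def by blast
        have "q \<in> I k N" using q I_dec N lN by blast
        then obtain p'' where p'': "p'' \<in> P N" "q = m k N p''" unfolding I_def by blast
        have pA: "p \<in> A N" "p'' \<in> A N" using p(1) p''(1) P_A[of N] by auto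
        have "x - q = m k N (p - p'')"
          using lin_on_diff[OF mod1 sub mlin[OF N(1)] pA] p(2) p''(2) by simp
        moreover have "p - p'' \<in> K N" using P_diff p p'' by blast
        ultimately have "x - q \<in> V k N" unfolding V_def by blast
        then have "x - q \<in> V k l" using N lN by blast
        then obtain z where z: "z \<in> K l" "x - q = m k l z" unfolding V_def by blast
        have kl: "k \<le> l" using N lN by simp
        have pzA: "p' \<in> A l" "z \<in> A l" using p'(1) z(1) P_A[of l] K_A[of l] by auto
        have "x = q + (x - q)" by simp
        also have "\<dots> = m k l p' + m k l z" using p' z by simp
        also have "\<dots> = m k l (p' + z)"
          using lin_on_add[OF mlin[OF kl] pzA] by simp
        finally have "x = m k l (p' + z)" .
        moreover have "p' + z \<in> P l" using P_addK p' z by blast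
        ultimately show "x \<in> I k l" unfolding I_def by blast
      qed
    qed
    then show ?thesis using N by blast
  qed
  have "\<forall>k. \<exists>N. N \<ge> k \<and> (\<forall>l\<ge>N. I k l = I k N)" using Istab by blast
  from choice[OF this] obtain N where N': "\<forall>k. N k \<ge> k \<and> (\<forall>l\<ge>N k. I k l = I k (N k))"
    by blast
  have N: "N k \<ge> k \<and> (\<forall>l\<ge>N k. I k l = I k (N k))" for k using N' by blast
  define S where "S k = I k (N k)" for k
  have S_I: "S k \<subseteq> I k l" if "k \<le> l" for k l
  proof (cases "l \<le> N k")
    case True then show ?thesis unfolding S_def using I_dec[OF that True] by simp
  next
    case False then have "N k \<le> l" by simp
    then have "I k l = I k (N k)" using N[of k] by blast
    then show ?thesis unfolding S_def by simp
  qed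
  have S_P: "S k \<subseteq> P k" for k unfolding S_def using I_P N by blast
  have S_ne: "S k \<noteq> {}" for k unfolding S_def using I_ne by blast
  have S_surj: "\<exists>x'\<in>S (Suc k). m k (Suc k) x' = x" if x: "x \<in> S k" for k x
  proof -
    define L where "L = max (N k) (N (Suc k))"
    have kL: "k \<le> L" "Suc k \<le> L" using N[of k] N[of "Suc k"] unfolding L_def by auto
    have "x \<in> I k L" using S_I[OF kL(1)] x by blast
    then obtain p where p: "p \<in> P L" "x = m k L p" unfolding I_def by blast
    define q where "q = m (Suc k) L p"
    have "q \<in> I (Suc k) L" unfolding q_def I_def using p by blast
    moreover have "N (Suc k) \<le> L" unfolding L_def by simp
    ultimately have "q \<in> S (Suc k)" unfolding S_def using N[of "Suc k"] by metis
    moreover have "m k (Suc k) q = x" unfolding q_def using comp[of k "Suc k" L p] kL p P_A by auto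
    ultimately show ?thesis by blast
  qed
  define x where "x = rec_nat (SOME z. z \<in> S 0) (\<lambda>k xk. SOME z. z \<in> S (Suc k) \<and> m k (Suc k) z = xk)"
  have x0: "x 0 = (SOME z. z \<in> S 0)" unfolding x_def by simp
  have xS': "x (Suc k) = (SOME z. z \<in> S (Suc k) \<and> m k (Suc k) z = x k)" for k
    unfolding x_def by simp
  have xS: "x k \<in> S k \<and> (k > 0 \<longrightarrow> m (k - 1) k (x k) = x (k - 1))" for k
  proof (induction k)
    case 0 then show ?case unfolding x0 using S_ne by (simp add: ex_in_conv[symmetric] some_in_eq)
  next
    case (Suc k)
    then have "\<exists>z. z \<in> S (Suc k) \<and> m k (Suc k) z = x k" using S_surj by blast
    then have "x (Suc k) \<in> S (Suc k) \<and> m k (Suc k) (x (Suc k)) = x k"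
      unfolding xS' by (rule someI_ex)
    then show ?case by simp
  qed
  have xA: "x k \<in> A k" for k using xS S_P P_A by blast
  have xf: "f k (x k) = y k" for k using xS S_P unfolding P_def by blast
  have compat: "m k l (x l) = x k" if "k \<le> l" for k l
    using that
  proof (induction rule: dec_induct)
    case base then show ?case using mid xA by blast
  next
    case (step n)
    have "m k (Suc n) (x (Suc n)) = m k n (m n (Suc n) (x (Suc n)))"
      using comp[of k n "Suc n"] step xA by simp
    also have "\<dots> = m k n (x n)" using xS[of "Suc n"] by simp
    finally show ?case using step by simp
  qed
  show ?thesis using xA xf compat by blast
qed

end


lemma isF_mod: "is_functor M s Ob Mor \<Longrightarrow> module s"
  by (simp add: is_functor_def module_iff_vector_space)
lemma isF_vs: "is_functor M s Ob Mor \<Longrightarrow> vector_space s"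
  by (simp add: is_functor_def)
lemma isF_sub: "is_functor M s Ob Mor \<Longrightarrow> u \<in> M \<Longrightarrow> module.subspace s (Ob u)"
  by (simp add: is_functor_def)
lemma isF_map: "is_functor M s Ob Mor \<Longrightarrow> u \<in> M \<Longrightarrow> w \<in> M \<Longrightarrow> leM u w \<Longrightarrow> x \<in> Ob w \<Longrightarrow> Mor u w x \<in> Ob u"
  unfolding is_functor_def by blast
lemma isF_lin: "is_functor M s Ob Mor \<Longrightarrow> u \<in> M \<Longrightarrow> w \<in> M \<Longrightarrow> leM u w \<Longrightarrow> lin_on s s (Ob w) (Mor u w)"
  unfolding is_functor_def by blast
lemma isF_id: "is_functor M s Ob Mor \<Longrightarrow> u \<in> M \<Longrightarrow> x \<in> Ob u \<Longrightarrow> Mor u u x = x"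
  unfolding is_functor_def by blast
lemma isF_comp: "is_functor M s Ob Mor \<Longrightarrow> u \<in> M \<Longrightarrow> v \<in> M \<Longrightarrow> w \<in> M \<Longrightarrow> leM u v \<Longrightarrow> leM v w
   \<Longrightarrow> x \<in> Ob w \<Longrightarrow> Mor u v (Mor v w x) = Mor u w x"
  unfolding is_functor_def by blast
lemma isF_zero_in: "is_functor M s Ob Mor \<Longrightarrow> u \<in> M \<Longrightarrow> 0 \<in> Ob u"
  using isF_sub isF_mod module.subspace_0 by blast
lemma isF_0: "is_functor M s Ob Mor \<Longrightarrow> u \<in> M \<Longrightarrow> w \<in> M \<Longrightarrow> leM u w \<Longrightarrow> Mor u w 0 = 0"
  using lin_on_0 isF_lin isF_zero_in by blast
lemma isF_diff: "is_functor M s Ob Mor \<Longrightarrow> u \<in> M \<Longrightarrow> w \<in> M \<Longrightarrow> leM u w \<Longrightarrow> x \<in> Ob w \<Longrightarrow> y \<in> Ob w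
   \<Longrightarrow> Mor u w (x - y) = Mor u w x - Mor u w y"
  by (rule lin_on_diff[OF isF_mod isF_sub isF_lin])
lemma isF_add: "is_functor M s Ob Mor \<Longrightarrow> u \<in> M \<Longrightarrow> w \<in> M \<Longrightarrow> leM u w \<Longrightarrow> x \<in> Ob w \<Longrightarrow> y \<in> Ob w
   \<Longrightarrow> Mor u w (x + y) = Mor u w x + Mor u w y"
  by (rule lin_on_add[OF isF_lin])
lemma isF_diff_in: "is_functor M s Ob Mor \<Longrightarrow> u \<in> M \<Longrightarrow> x \<in> Ob u \<Longrightarrow> y \<in> Ob u \<Longrightarrow> x - y \<in> Ob u"
  using isF_sub isF_mod module.subspace_diff by blast
lemma isF_add_in: "is_functor M s Ob Mor \<Longrightarrow> u \<in> M \<Longrightarrow> x \<in> Ob u \<Longrightarrow> y \<in> Ob u \<Longrightarrow> x + y \<in> Ob u"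
  using isF_sub isF_mod module.subspace_add by blast

lemma isN_map: "is_nat_trans M s1 O1 M1 s2 O2 M2 f \<Longrightarrow> u \<in> M \<Longrightarrow> x \<in> O1 u \<Longrightarrow> f u x \<in> O2 u"
  unfolding is_nat_trans_def by blast
lemma isN_lin: "is_nat_trans M s1 O1 M1 s2 O2 M2 f \<Longrightarrow> u \<in> M \<Longrightarrow> lin_on s1 s2 (O1 u) (f u)"
  unfolding is_nat_trans_def by blast
lemma isN_nat: "is_nat_trans M s1 O1 M1 s2 O2 M2 f \<Longrightarrow> u \<in> M \<Longrightarrow> w \<in> M \<Longrightarrow> leM u w \<Longrightarrow> x \<in> O1 w
   \<Longrightarrow> f u (M1 u w x) = M2 u w (f w x)"
  unfolding is_nat_trans_def by blast
lemma isN_0: "is_functor M s1 O1 M1 \<Longrightarrow> is_nat_trans M s1 O1 M1 s2 O2 M2 f \<Longrightarrow> u \<in> M \<Longrightarrow> f u 0 = 0"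
  using lin_on_0 isN_lin isF_zero_in by blast
lemma isN_diff: "is_functor M s1 O1 M1 \<Longrightarrow> is_nat_trans M s1 O1 M1 s2 O2 M2 f \<Longrightarrow> u \<in> M
   \<Longrightarrow> x \<in> O1 u \<Longrightarrow> y \<in> O1 u \<Longrightarrow> f u (x - y) = f u x - f u y"
  by (rule lin_on_diff[OF isF_mod isF_sub isN_lin])
lemma isN_add: "is_nat_trans M s1 O1 M1 s2 O2 M2 f \<Longrightarrow> u \<in> M
   \<Longrightarrow> x \<in> O1 u \<Longrightarrow> y \<in> O1 u \<Longrightarrow> f u (x + y) = f u x + f u y"
  by (rule lin_on_add[OF isN_lin])

lemma ex_ker: "exact_at M O1 f O2 g \<Longrightarrow> u \<in> M \<Longrightarrow> y \<in> O2 u \<Longrightarrow> g u y = 0 \<Longrightarrow> \<exists>x\<in>O1 u. y = f u x"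
  unfolding exact_at_def by blast
lemma ex_comp: "exact_at M O1 f O2 g \<Longrightarrow> u \<in> M \<Longrightarrow> x \<in> O1 u \<Longrightarrow> g u (f u x) = 0"
  unfolding exact_at_def by blast

lemma functor_lift:
  assumes F: "is_functor M s Ob Mor" and F': "is_functor M s' Ob' Mor'"
    and N: "is_nat_trans M s Ob Mor s' Ob' Mor' f" and P: "pfd M s Ob"
    and uM: "\<And>k. uu k \<in> M" and le: "\<And>k l. k \<le> l \<Longrightarrow> leM (uu k) (uu l)"
    and yc: "\<And>k l. k \<le> l \<Longrightarrow> Mor' (uu k) (uu l) (y l) = y k"
    and ne: "\<And>k. \<exists>x\<in>Ob (uu k). f (uu k) x = y k"
  shows "\<exists>x\<in>invlim Ob Mor uu. \<forall>k. f (uu k) (x k) = y k"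
proof -
  interpret V: vector_space s using isF_vs[OF F] .
  have "\<exists>x. (\<forall>k. x k \<in> Ob (uu k) \<and> f (uu k) (x k) = y k) \<and>
     (\<forall>k l. k \<le> l \<longrightarrow> Mor (uu k) (uu l) (x l) = x k)"
  proof (rule V.tower_lift[of s' "\<lambda>k. Ob (uu k)" "\<lambda>k l. Mor (uu k) (uu l)" "\<lambda>k. f (uu k)" y])
    show "module s'" using isF_mod[OF F'] .
    show "\<And>k. V.subspace (Ob (uu k))" using isF_sub[OF F uM] .
    show "\<And>k. \<exists>B. finite B \<and> Ob (uu k) \<subseteq> V.span B"
      using P uM unfolding pfd_def by (metis order_refl)
    show "\<And>k l. k \<le> l \<Longrightarrow> Mor (uu k) (uu l) ` Ob (uu l) \<subseteq> Ob (uu k)"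
      using isF_map[OF F uM uM le] by blast
    show "\<And>k l. k \<le> l \<Longrightarrow> lin_on s s (Ob (uu l)) (Mor (uu k) (uu l))"
      using isF_lin[OF F uM uM le] .
    show "\<And>k x. x \<in> Ob (uu k) \<Longrightarrow> Mor (uu k) (uu k) x = x"
      using isF_id[OF F uM] .
    show "\<And>k l n x. k \<le> l \<Longrightarrow> l \<le> n \<Longrightarrow> x \<in> Ob (uu n)
        \<Longrightarrow> Mor (uu k) (uu l) (Mor (uu l) (uu n) x) = Mor (uu k) (uu n) x"
      using isF_comp[OF F uM uM uM le le] .
    show "\<And>l. lin_on s s' (Ob (uu l)) (f (uu l))" using isN_lin[OF N uM] .
    show "\<And>k l x. k \<le> l \<Longrightarrow> x \<in> Ob (uu l) \<Longrightarrow> f (uu l) x = y l \<Longrightarrow> f (uu k) (Mor (uu k) (uu l) x) = y k"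
      using isN_nat[OF N uM uM le] yc by metis
    show "\<And>l. \<exists>x\<in>Ob (uu l). f (uu l) x = y l" using ne .
  qed
  then show ?thesis unfolding invlim_def by blast
qed

lemma phi_in:
  assumes F: "is_functor M s Ob Mor" and uM: "\<And>k. uu k \<in> M" and u: "u \<in> M"
    and le: "\<And>k l. k \<le> l \<Longrightarrow> leM (uu k) (uu l)" and leu: "\<And>k. leM (uu k) u" and x: "x \<in> Ob u"
  shows "(\<lambda>k. Mor (uu k) u x) \<in> invlim Ob Mor uu"
  unfolding invlim_def using isF_map[OF F uM u leu x] isF_comp[OF F uM uM u le leu x] by auto


lemma strip_facts:
  assumes uM: "\<And>k. uu k \<in> Mstrip a b" and inc: "\<And>k. leM (uu k) (uu (Suc k))" and lim: "uu \<longlonglongrightarrow> u"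
  shows "u \<in> Mstrip a b" "\<And>k. leM (uu k) u" "\<And>k l. k \<le> l \<Longrightarrow> leM (uu k) (uu l)"
proof -
  have sl: "(\<lambda>k. fst (uu k) + snd (uu k)) \<longlonglongrightarrow> fst u + snd u"
    by (intro tendsto_intros lim)
  have "a \<le> fst u + snd u"
    by (rule LIMSEQ_le_const[OF sl]) (use uM in \<open>auto simp: Mstrip_def\<close>)
  moreover have "fst u + snd u \<le> b"
    by (rule LIMSEQ_le_const2[OF sl]) (use uM in \<open>auto simp: Mstrip_def\<close>)
  ultimately show "u \<in> Mstrip a b" by (simp add: Mstrip_def)
  have d: "decseq (\<lambda>k. fst (uu k))" by (rule decseq_SucI) (use inc in \<open>simp add: leM_def\<close>)
  have i: "incseq (\<lambda>k. snd (uu k))" by (rule incseq_SucI) (use inc in \<open>simp add: leM_def\<close>)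
  have lf: "(\<lambda>k. fst (uu k)) \<longlonglongrightarrow> fst u" by (intro tendsto_intros lim)
  have ls: "(\<lambda>k. snd (uu k)) \<longlonglongrightarrow> snd u" by (intro tendsto_intros lim)
  show "leM (uu k) u" for k
    using decseq_ge[OF d lf, of k] incseq_le[OF i ls, of k] by (simp add: leM_def)
  show "leM (uu k) (uu l)" if "k \<le> l" for k l
    using d i that unfolding decseq_def incseq_def leM_def by blast
qed

theorem lemma3p20:
  fixes a b :: real
    and s1 :: "'k::field \<Rightarrow> 'v1::ab_group_add \<Rightarrow> 'v1" and O1 :: "real \<times> real \<Rightarrow> 'v1 set"
    and M1 :: "real \<times> real \<Rightarrow> real \<times> real \<Rightarrow> 'v1 \<Rightarrow> 'v1"
    and s2 :: "'k \<Rightarrow> 'v2::ab_group_add \<Rightarrow> 'v2" and O2 :: "real \<times> real \<Rightarrow> 'v2 set"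
    and M2 :: "real \<times> real \<Rightarrow> real \<times> real \<Rightarrow> 'v2 \<Rightarrow> 'v2"
    and s3 :: "'k \<Rightarrow> 'v3::ab_group_add \<Rightarrow> 'v3" and O3 :: "real \<times> real \<Rightarrow> 'v3 set"
    and M3 :: "real \<times> real \<Rightarrow> real \<times> real \<Rightarrow> 'v3 \<Rightarrow> 'v3"
    and s4 :: "'k \<Rightarrow> 'v4::ab_group_add \<Rightarrow> 'v4" and O4 :: "real \<times> real \<Rightarrow> 'v4 set"
    and M4 :: "real \<times> real \<Rightarrow> real \<times> real \<Rightarrow> 'v4 \<Rightarrow> 'v4"
    and s5 :: "'k \<Rightarrow> 'v5::ab_group_add \<Rightarrow> 'v5" and O5 :: "real \<times> real \<Rightarrow> 'v5 set"
    and M5 :: "real \<times> real \<Rightarrow> real \<times> real \<Rightarrow> 'v5 \<Rightarrow> 'v5"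
    and f1 :: "real \<times> real \<Rightarrow> 'v1 \<Rightarrow> 'v2" and f2 :: "real \<times> real \<Rightarrow> 'v2 \<Rightarrow> 'v3"
    and f3 :: "real \<times> real \<Rightarrow> 'v3 \<Rightarrow> 'v4" and f4 :: "real \<times> real \<Rightarrow> 'v4 \<Rightarrow> 'v5"
  assumes "a < b"
    and F1: "is_functor (Mstrip a b) s1 O1 M1"
    and F2: "is_functor (Mstrip a b) s2 O2 M2"
    and F3: "is_functor (Mstrip a b) s3 O3 M3"
    and F4: "is_functor (Mstrip a b) s4 O4 M4"
    and F5: "is_functor (Mstrip a b) s5 O5 M5"
    and N1: "is_nat_trans (Mstrip a b) s1 O1 M1 s2 O2 M2 f1"
    and N2: "is_nat_trans (Mstrip a b) s2 O2 M2 s3 O3 M3 f2"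
    and N3: "is_nat_trans (Mstrip a b) s3 O3 M3 s4 O4 M4 f3"
    and N4: "is_nat_trans (Mstrip a b) s4 O4 M4 s5 O5 M5 f4"
    and E2: "exact_at (Mstrip a b) O1 f1 O2 f2"
    and E3: "exact_at (Mstrip a b) O2 f2 O3 f3"
    and E4: "exact_at (Mstrip a b) O3 f3 O4 f4"
    and P1: "pfd (Mstrip a b) s1 O1" and C1: "seq_cont (Mstrip a b) O1 M1"
    and P2: "pfd (Mstrip a b) s2 O2" and C2: "seq_cont (Mstrip a b) O2 M2"
    and P4: "pfd (Mstrip a b) s4 O4" and C4: "seq_cont (Mstrip a b) O4 M4"
    and P5: "pfd (Mstrip a b) s5 O5" and C5: "seq_cont (Mstrip a b) O5 M5"
  shows "pfd (Mstrip a b) s3 O3 \<and> seq_cont (Mstrip a b) O3 M3"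
proof
  interpret V2: vector_space s2 using isF_vs[OF F2] .
  interpret V3: vector_space s3 using isF_vs[OF F3] .
  interpret V4: vector_space s4 using isF_vs[OF F4] .
  have m2: "module s2" "module s3" "module s4" using isF_mod F2 F3 F4 by blast+
  show "pfd (Mstrip a b) s3 O3"
    unfolding pfd_def
  proof
    fix u assume u: "u \<in> Mstrip a b"
    obtain B2 where B2: "finite B2" "B2 \<subseteq> O2 u" "V2.span B2 = O2 u" using P2 u unfolding pfd_def by blast
    obtain B4 where B4: "finite B4" "B4 \<subseteq> O4 u" "V4.span B4 = O4 u" using P4 u unfolding pfd_def by blast
    define W where "W = f3 u ` O3 u"
    have WO: "W \<subseteq> O4 u" unfolding W_def using isN_map[OF N3 u] by blast
    obtain B where B: "B \<subseteq> W" "V4.independent B" "W \<subseteq> V4.span B" using V4.basis_exists by metis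
    have fB: "finite B" using V4.independent_span_bound[OF B4(1) B(2)] B(1) WO B4(3) by blast
    have "\<forall>b\<in>B. \<exists>c\<in>O3 u. f3 u c = b" using B(1) unfolding W_def by blast
    then obtain c where c: "\<And>b. b \<in> B \<Longrightarrow> c b \<in> O3 u \<and> f3 u (c b) = b" by metis
    define C where "C = c ` B"
    have CO: "C \<subseteq> O3 u" unfolding C_def using c by blast
    have fC: "f3 u ` C = B" unfolding C_def using c by (auto simp: image_iff)
    define G where "G = f2 u ` B2 \<union> C"
    have GO: "G \<subseteq> O3 u" unfolding G_def using CO isN_map[OF N2 u] B2(2) by blast
    have finG: "finite G" unfolding G_def C_def using B2(1) fB by simp
    have sub3: "V3.subspace (O3 u)" using isF_sub[OF F3 u] .
    have "V3.span G = O3 u"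
    proof
      show "V3.span G \<subseteq> O3 u" using V3.span_minimal[OF GO sub3] .
      show "O3 u \<subseteq> V3.span G"
      proof
        fix x assume x: "x \<in> O3 u"
        have "f3 u x \<in> V4.span B" using x B(3) unfolding W_def by blast
        also have "V4.span B = f3 u ` V3.span C"
          using lin_on_span[OF m2(2) m2(3) sub3 isN_lin[OF N3 u] CO] fC by simp
        finally obtain yy where yy: "yy \<in> V3.span C" "f3 u x = f3 u yy" by blast
        have yyO: "yy \<in> O3 u" using yy(1) V3.span_minimal[OF CO sub3] by blast
        have d0: "f3 u (x - yy) = 0" using isN_diff[OF F3 N3 u x yyO] yy(2) by simp
        have dO: "x - yy \<in> O3 u" using isF_diff_in[OF F3 u x yyO] .
        obtain z where z: "z \<in> O2 u" "x - yy = f2 u z" using ex_ker[OF E3 u dO d0] by blast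
        have "x - yy \<in> f2 u ` V2.span B2" using z B2(3) by blast
        also have "f2 u ` V2.span B2 = V3.span (f2 u ` B2)"
          using lin_on_span[OF m2(1) m2(2) isF_sub[OF F2 u] isN_lin[OF N2 u] B2(2)] .
        finally have "x - yy \<in> V3.span G" using V3.span_mono[of "f2 u ` B2" G] unfolding G_def by blast
        moreover have "yy \<in> V3.span G" using yy(1) V3.span_mono[of C G] unfolding G_def by blast
        ultimately have "(x - yy) + yy \<in> V3.span G" by (rule V3.span_add)
        then show "x \<in> V3.span G" by simp
      qed
    qed
    then show "\<exists>B. finite B \<and> B \<subseteq> O3 u \<and> V3.span B = O3 u" using finG GO by blast
  qed
next
  show "seq_cont (Mstrip a b) O3 M3"
    unfolding seq_cont_def
  proof (intro allI impI)
    fix uu u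
    assume H: "(\<forall>k. uu k \<in> Mstrip a b) \<and> (\<forall>k. leM (uu k) (uu (Suc k))) \<and> uu \<longlonglongrightarrow> u"
    have uM: "\<And>k. uu k \<in> Mstrip a b" using H by blast
    have inc: "\<And>k. leM (uu k) (uu (Suc k))" using H by blast
    have lim: "uu \<longlonglongrightarrow> u" using H by blast
    note SF = strip_facts[of uu a b u, OF uM inc lim]
    have u: "u \<in> Mstrip a b" using SF(1) .
    have leu: "\<And>k. leM (uu k) u" using SF(2) .
    have le: "\<And>k l. k \<le> l \<Longrightarrow> leM (uu k) (uu l)" using SF(3) .
    have bij1: "bij_betw (\<lambda>x k. M1 (uu k) u x) (O1 u) (invlim O1 M1 uu)"
      using C1 H unfolding seq_cont_def by blast
    have bij2: "bij_betw (\<lambda>x k. M2 (uu k) u x) (O2 u) (invlim O2 M2 uu)"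
      using C2 H unfolding seq_cont_def by blast
    have bij4: "bij_betw (\<lambda>x k. M4 (uu k) u x) (O4 u) (invlim O4 M4 uu)"
      using C4 H unfolding seq_cont_def by blast
    have bij5: "bij_betw (\<lambda>x k. M5 (uu k) u x) (O5 u) (invlim O5 M5 uu)"
      using C5 H unfolding seq_cont_def by blast
    have inj2: "\<And>x y. x \<in> O2 u \<Longrightarrow> y \<in> O2 u \<Longrightarrow> (\<And>k. M2 (uu k) u x = M2 (uu k) u y) \<Longrightarrow> x = y"
      using bij2 unfolding bij_betw_def inj_on_def by (metis ext)
    have inj4: "\<And>x y. x \<in> O4 u \<Longrightarrow> y \<in> O4 u \<Longrightarrow> (\<And>k. M4 (uu k) u x = M4 (uu k) u y) \<Longrightarrow> x = y"
      using bij4 unfolding bij_betw_def inj_on_def by (metis ext)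
    have inj5: "\<And>x y. x \<in> O5 u \<Longrightarrow> y \<in> O5 u \<Longrightarrow> (\<And>k. M5 (uu k) u x = M5 (uu k) u y) \<Longrightarrow> x = y"
      using bij5 unfolding bij_betw_def inj_on_def by (metis ext)
    have sur1: "\<And>z. z \<in> invlim O1 M1 uu \<Longrightarrow> \<exists>w\<in>O1 u. z = (\<lambda>k. M1 (uu k) u w)"
      using bij1 unfolding bij_betw_def by blast
    have sur2: "\<And>z. z \<in> invlim O2 M2 uu \<Longrightarrow> \<exists>w\<in>O2 u. z = (\<lambda>k. M2 (uu k) u w)"
      using bij2 unfolding bij_betw_def by blast
    have sur4: "\<And>z. z \<in> invlim O4 M4 uu \<Longrightarrow> \<exists>w\<in>O4 u. z = (\<lambda>k. M4 (uu k) u w)"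
      using bij4 unfolding bij_betw_def by blast
    have ker: "d = 0" if dO: "d \<in> O3 u" and d0: "\<And>k. M3 (uu k) u d = 0" for d
    proof -
      have e4: "f3 u d \<in> O4 u" using isN_map[OF N3 u dO] .
      have "M4 (uu k) u (f3 u d) = M4 (uu k) u 0" for k
      proof -
        have "M4 (uu k) u (f3 u d) = f3 (uu k) (M3 (uu k) u d)"
          using isN_nat[OF N3 uM u leu dO] by simp
        also have "\<dots> = 0" using d0 isN_0[OF F3 N3 uM] by simp
        also have "\<dots> = M4 (uu k) u 0" using isF_0[OF F4 uM u leu] by simp
        finally show ?thesis .
      qed
      then have "f3 u d = 0" using inj4[OF e4 isF_zero_in[OF F4 u]] by blast
      then obtain y where y: "y \<in> O2 u" "d = f2 u y" using ex_ker[OF E3 u dO] by blast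
      define Y where "Y k = M2 (uu k) u y" for k
      have "\<exists>z\<in>invlim O1 M1 uu. \<forall>k. f1 (uu k) (z k) = Y k"
      proof (rule functor_lift[OF F1 F2 N1 P1 uM le])
        show "M2 (uu k) (uu l) (Y l) = Y k" if "k \<le> l" for k l
          unfolding Y_def using isF_comp[OF F2 uM uM u le[OF that] leu y(1)] .
        show "\<exists>x\<in>O1 (uu k). f1 (uu k) x = Y k" for k
        proof -
          have YO: "Y k \<in> O2 (uu k)" unfolding Y_def using isF_map[OF F2 uM u leu y(1)] .
          have "f2 (uu k) (Y k) = M3 (uu k) u (f2 u y)"
            unfolding Y_def using isN_nat[OF N2 uM u leu y(1)] .
          also have "\<dots> = 0" using d0 y(2) by simp
          finally show ?thesis using ex_ker[OF E2 uM YO] by metis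
        qed
      qed
      then obtain z where z: "z \<in> invlim O1 M1 uu" "\<And>k. f1 (uu k) (z k) = Y k" by blast
      obtain w where w: "w \<in> O1 u" "z = (\<lambda>k. M1 (uu k) u w)" using sur1[OF z(1)] by blast
      have fw: "f1 u w \<in> O2 u" using isN_map[OF N1 u w(1)] .
      have "M2 (uu k) u (f1 u w) = M2 (uu k) u y" for k
      proof -
        have "M2 (uu k) u (f1 u w) = f1 (uu k) (M1 (uu k) u w)"
          using isN_nat[OF N1 uM u leu w(1)] by simp
        also have "\<dots> = Y k" using z(2)[of k] w(2) by simp
        finally show ?thesis unfolding Y_def .
      qed
      then have "f1 u w = y" using inj2[OF fw y(1)] by blast
      then show "d = 0" using y(2) ex_comp[OF E2 u w(1)] by simp
    qed
    have phi3: "(\<lambda>k. M3 (uu k) u x) \<in> invlim O3 M3 uu" if "x \<in> O3 u" for x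
      using phi_in[OF F3 uM u le leu that] .
    have inj3: "inj_on (\<lambda>x k. M3 (uu k) u x) (O3 u)"
    proof (rule inj_onI)
      fix x y assume x: "x \<in> O3 u" and y: "y \<in> O3 u"
        and e: "(\<lambda>k. M3 (uu k) u x) = (\<lambda>k. M3 (uu k) u y)"
      have "M3 (uu k) u (x - y) = 0" for k
        using isF_diff[OF F3 uM u leu x y] fun_cong[OF e, of k] by simp
      then have "x - y = 0" using ker[OF isF_diff_in[OF F3 u x y]] by blast
      then show "x = y" by simp
    qed
    have sur3: "t \<in> (\<lambda>x k. M3 (uu k) u x) ` O3 u" if t: "t \<in> invlim O3 M3 uu" for t
    proof -
      have tO: "\<And>k. t k \<in> O3 (uu k)" and tc: "\<And>k l. k \<le> l \<Longrightarrow> M3 (uu k) (uu l) (t l) = t k"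
        using t unfolding invlim_def by blast+
      define sq where "sq k = f3 (uu k) (t k)" for k
      have "sq \<in> invlim O4 M4 uu"
        unfolding invlim_def sq_def
        using isN_map[OF N3 uM tO] isN_nat[OF N3 uM uM le tO] tc by auto
      then obtain aa where aa: "aa \<in> O4 u" "sq = (\<lambda>k. M4 (uu k) u aa)" using sur4 by blast
      have fa: "f4 u aa \<in> O5 u" using isN_map[OF N4 u aa(1)] .
      have "M5 (uu k) u (f4 u aa) = M5 (uu k) u 0" for k
      proof -
        have "M5 (uu k) u (f4 u aa) = f4 (uu k) (M4 (uu k) u aa)"
          using isN_nat[OF N4 uM u leu aa(1)] by simp
        also have "\<dots> = f4 (uu k) (sq k)" using aa(2) by simp
        also have "\<dots> = 0" unfolding sq_def using ex_comp[OF E4 uM tO] .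
        also have "\<dots> = M5 (uu k) u 0" using isF_0[OF F5 uM u leu] by simp
        finally show ?thesis .
      qed
      then have "f4 u aa = 0" using inj5[OF fa isF_zero_in[OF F5 u]] by blast
      then obtain x' where x': "x' \<in> O3 u" "aa = f3 u x'" using ex_ker[OF E4 u aa(1)] by blast
      define r where "r k = t k - M3 (uu k) u x'" for k
      have mx: "\<And>k. M3 (uu k) u x' \<in> O3 (uu k)" using isF_map[OF F3 uM u leu x'(1)] .
      have rO: "r k \<in> O3 (uu k)" for k unfolding r_def using isF_diff_in[OF F3 uM tO mx] .
      have r0: "f3 (uu k) (r k) = 0" for k
      proof -
        have "f3 (uu k) (r k) = f3 (uu k) (t k) - f3 (uu k) (M3 (uu k) u x')"
          unfolding r_def using isN_diff[OF F3 N3 uM tO mx] .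
        also have "f3 (uu k) (M3 (uu k) u x') = M4 (uu k) u aa"
          using isN_nat[OF N3 uM u leu x'(1)] x'(2) by simp
        also have "\<dots> = sq k" using aa(2) by simp
        finally show ?thesis unfolding sq_def by simp
      qed
      have "\<exists>q\<in>invlim O2 M2 uu. \<forall>k. f2 (uu k) (q k) = r k"
      proof (rule functor_lift[OF F2 F3 N2 P2 uM le])
        show "M3 (uu k) (uu l) (r l) = r k" if kl: "k \<le> l" for k l
        proof -
          have "M3 (uu k) (uu l) (r l) = M3 (uu k) (uu l) (t l) - M3 (uu k) (uu l) (M3 (uu l) u x')"
            unfolding r_def using isF_diff[OF F3 uM uM le[OF kl] tO mx] .
          also have "\<dots> = t k - M3 (uu k) u x'"
            using tc[OF kl] isF_comp[OF F3 uM uM u le[OF kl] leu x'(1)] by simp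
          finally show ?thesis unfolding r_def .
        qed
        show "\<exists>x\<in>O2 (uu k). f2 (uu k) x = r k" for k
          using ex_ker[OF E3 uM rO r0] by metis
      qed
      then obtain q where q: "q \<in> invlim O2 M2 uu" "\<And>k. f2 (uu k) (q k) = r k" by blast
      obtain p where p: "p \<in> O2 u" "q = (\<lambda>k. M2 (uu k) u p)" using sur2[OF q(1)] by blast
      have fp: "f2 u p \<in> O3 u" using isN_map[OF N2 u p(1)] .
      define x where "x = f2 u p + x'"
      have xO: "x \<in> O3 u" unfolding x_def using isF_add_in[OF F3 u fp x'(1)] .
      have "M3 (uu k) u x = t k" for k
      proof -
        have "M3 (uu k) u x = M3 (uu k) u (f2 u p) + M3 (uu k) u x'"
          unfolding x_def using isF_add[OF F3 uM u leu fp x'(1)] .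
        also have "M3 (uu k) u (f2 u p) = f2 (uu k) (M2 (uu k) u p)"
          using isN_nat[OF N2 uM u leu p(1)] by simp
        also have "\<dots> = r k" using q(2)[of k] p(2) by simp
        finally show ?thesis unfolding r_def by simp
      qed
      then have "t = (\<lambda>k. M3 (uu k) u x)" by auto
      then show ?thesis using xO by blast
    qed
    show "bij_betw (\<lambda>x k. M3 (uu k) u x) (O3 u) (invlim O3 M3 uu)"
      unfolding bij_betw_def using inj3 phi3 sur3 by blast
  qed
qed

end
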